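(* Let $U=\{u_1,\dots,u_{2^m}\}\subseteq\mathbb{F}_2^n\setminus\{0\}$ be a set of $2^m$ distinct nonzero vectors, let $B:\mathbb{F}_2^n\to\mathbb{F}_2^m$ be a uniformly random linear map, fix $y\in\mathbb{F}_2^m$, and let $Z_y:=|\{i:Bu_i=y\}|$. Then for every integer $a\ge1$, \[ \Pr[Z_y>2^a-2]\le\gamma^{-1}2^{-a^2}, \] where $\gamma:=\prod_{j=1}^\infty(1-2^{-j})$.
   Context: A uniformly random linear map $\mathbb{F}_2^n\to\mathbb{F}_2^m$ is one chosen uniformly among all linear maps. *)

theory Defs
  imports "HOL-Probability.Probability"
begin

text \<open>Vectors of F_2^n: functions nat => bool (True = 1), zero outside {0..<n}.\<close>
definition F2vec :: "nat \<Rightarrow> (nat \<Rightarrow> bool) set" where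
  "F2vec n = {v. \<forall>i\<ge>n. \<not> v i}"

definition F2zero :: "nat \<Rightarrow> bool" where
  "F2zero = (\<lambda>_. False)"

definition F2add :: "(nat \<Rightarrow> bool) \<Rightarrow> (nat \<Rightarrow> bool) \<Rightarrow> (nat \<Rightarrow> bool)" where
  "F2add x z = (\<lambda>i. x i \<noteq> z i)"

text \<open>Linear maps F_2^n -> F_2^m (as extensional functions on the carrier).
  Over F_2 linearity is just additivity (scalars are 0 and 1).\<close>
definition F2lin :: "nat \<Rightarrow> nat \<Rightarrow> ((nat \<Rightarrow> bool) \<Rightarrow> (nat \<Rightarrow> bool)) set" where
  "F2lin n m = {f \<in> F2vec n \<rightarrow>\<^sub>E F2vec m.
     \<forall>x\<in>F2vec n. \<forall>z\<in>F2vec n. f (F2add x z) = F2add (f x) (f z)}"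

definition gamma2 :: real where
  "gamma2 = (\<Prod>j. 1 - (1/2::real) ^ Suc j)"

end

theory Submission imports Defs begin

lemma hp: "(1/2::real)^i \<le> 1" by (simp add: power_le_one)
lemma hp2: "(1/2::real)^Suc i \<le> 1/2" using hp[of i] by simp

lemma hp3: "0 \<le> 1 - (1/2::real)^Suc i \<and> 1 - (1/2::real)^Suc i \<le> 1 \<and> 1 - (1/2::real)^Suc i \<noteq> 0"
proof -
  have "(1/2::real)^Suc i > 0" by simp
  then show ?thesis using hp2[of i] by linarith
qed

lemma gamma_conv: "convergent_prod (\<lambda>j. 1 - (1/2::real) ^ Suc j)"
proof -
  have "convergent_prod (\<lambda>k. 1 + (-((1/2::real) ^ Suc k)))"
  proof (rule summable_imp_convergent_prod_real)
    show "summable (\<lambda>k. \<bar>-((1/2::real) ^ Suc k)\<bar>)"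
      by (simp add: summable_geometric)
    fix k show "-((1/2::real) ^ Suc k) \<noteq> -1"
      using hp2[of k] by linarith
  qed
  then show ?thesis by simp
qed

lemma gamma_pos: "gamma2 > 0"
proof -
  have ne: "gamma2 \<noteq> 0" unfolding gamma2_def
    by (rule prodinf_nonzero[OF gamma_conv]) (use hp3 in blast)
  have "(\<lambda>n. \<Prod>i\<le>n. 1 - (1/2::real) ^ Suc i) \<longlonglongrightarrow> gamma2"
    unfolding gamma2_def by (rule convergent_prod_LIMSEQ[OF gamma_conv])
  moreover have "\<And>n. (\<Prod>i\<le>n. 1 - (1/2::real) ^ Suc i) \<ge> 0"
    by (intro prod_nonneg) (use hp3 in blast)
  ultimately have "gamma2 \<ge> 0" by (meson LIMSEQ_le_const)
  with ne show ?thesis by simp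
qed

lemma gamma_le: "gamma2 \<le> (\<Prod>j<a. 1 - (1/2::real) ^ Suc j)"
  unfolding gamma2_def
proof (rule prodinf_le_const[OF gamma_conv])
  fix n assume "n \<ge> a"
  then have "{..<n} = {..<a} \<union> {a..<n}" by auto
  then have "(\<Prod>j<n. 1 - (1/2::real) ^ Suc j) = (\<Prod>j<a. 1 - (1/2::real) ^ Suc j) * (\<Prod>j\<in>{a..<n}. 1 - (1/2::real) ^ Suc j)"
    by (simp add: prod.union_disjoint ivl_disj_int)
  also have "\<dots> \<le> (\<Prod>j<a. 1 - (1/2::real) ^ Suc j) * 1"
    by (intro mult_left_mono prod_le_1 prod_nonneg) (use hp3 in blast)+
  finally show "(\<Prod>j<n. 1 - (1/2::real) ^ Suc j) \<le> (\<Prod>j<a. 1 - (1/2::real) ^ Suc j)" by simp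
qed


lemma add_comm: "F2add x z = F2add z x" by (auto simp: F2add_def fun_eq_iff)
lemma add_assoc: "F2add (F2add x z) w = F2add x (F2add z w)" by (auto simp: F2add_def fun_eq_iff)
lemma add_self[simp]: "F2add x x = F2zero" by (auto simp: F2add_def F2zero_def fun_eq_iff)
lemma add_zero[simp]: "F2add x F2zero = x" "F2add F2zero x = x" by (auto simp: F2add_def F2zero_def fun_eq_iff)
lemma add_cancel[simp]: "F2add x (F2add x z) = z" "F2add (F2add z x) x = z"
  by (auto simp: F2add_def fun_eq_iff)
lemma add_vec[intro]: "x \<in> F2vec n \<Longrightarrow> z \<in> F2vec n \<Longrightarrow> F2add x z \<in> F2vec n"
  by (auto simp: F2add_def F2vec_def)
lemma zero_vec[simp,intro]: "F2zero \<in> F2vec n" by (auto simp: F2zero_def F2vec_def)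

lemma F2vec_img: "F2vec n = (\<lambda>S i. i \<in> S) ` Pow {..<n}"
proof -
  have "v \<in> (\<lambda>S i. i \<in> S) ` Pow {..<n}" if "v \<in> F2vec n" for v
    using that by (intro image_eqI[of _ _ "{i. v i}"]) (auto simp: F2vec_def not_le[symmetric])
  then show ?thesis by (auto simp: F2vec_def)
qed

lemma card_F2vec: "card (F2vec n) = 2 ^ n" and finite_F2vec[simp]: "finite (F2vec n)"
proof -
  have "inj_on (\<lambda>S i. i \<in> S) (Pow {..<n})" by (auto simp: inj_on_def fun_eq_iff)
  then show "card (F2vec n) = 2 ^ n" by (simp add: F2vec_img card_image card_Pow)
  show "finite (F2vec n)" by (simp add: F2vec_img)
qed

inductive_set F2span :: "(nat \<Rightarrow> bool) set \<Rightarrow> (nat \<Rightarrow> bool) set" for A where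
  span_zero[simp, intro]: "F2zero \<in> F2span A"
| span_step: "a \<in> A \<Longrightarrow> x \<in> F2span A \<Longrightarrow> F2add a x \<in> F2span A"

lemma span_base: "a \<in> A \<Longrightarrow> a \<in> F2span A"
  using F2span.span_step[of a A F2zero] by simp

lemma span_add: "x \<in> F2span A \<Longrightarrow> z \<in> F2span A \<Longrightarrow> F2add x z \<in> F2span A"
  by (induction x rule: F2span.induct) (auto simp: add_assoc intro: F2span.span_step)

lemma span_mono: "A \<subseteq> B \<Longrightarrow> F2span A \<subseteq> F2span B"
proof
  fix x assume "x \<in> F2span A" "A \<subseteq> B" then show "x \<in> F2span B"
    by (induction x rule: F2span.induct) (auto intro: F2span.span_step)
qed

lemma span_vec: "A \<subseteq> F2vec n \<Longrightarrow> F2span A \<subseteq> F2vec n"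
proof
  fix x assume "x \<in> F2span A" "A \<subseteq> F2vec n" then show "x \<in> F2vec n"
    by (induction x rule: F2span.induct) auto
qed

lemma span_empty: "F2span {} = {F2zero}"
proof -
  have "x = F2zero" if "x \<in> F2span {}" for x using that by (induction x rule: F2span.induct) auto
  then show ?thesis by auto
qed

lemma span_insert: "F2span (insert a A) \<subseteq> F2span A \<union> F2add a ` F2span A"
proof
  fix x assume "x \<in> F2span (insert a A)"
  then show "x \<in> F2span A \<union> F2add a ` F2span A"
  proof (induction x rule: F2span.induct)
    case span_zero then show ?case by auto
  next
    case (span_step b x)
    show ?case
    proof (cases "b = a")
      case True
      with span_step.IH show ?thesis
        by (auto simp: add_assoc[symmetric])
    next
      case False
      then have b: "b \<in> A" using span_step by auto
      from span_step.IH show ?thesis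
      proof
        assume "x \<in> F2span A" then show ?thesis using b by (auto intro: F2span.span_step)
      next
        assume "x \<in> F2add a ` F2span A"
        then obtain x' where "x' \<in> F2span A" "x = F2add a x'" by auto
        then have "F2add b x = F2add a (F2add b x')"
          by (metis add_assoc add_comm)
        then show ?thesis using b \<open>x' \<in> F2span A\<close> by (auto intro: F2span.span_step)
      qed
    qed
  qed
qed

lemma span_card: "finite A \<Longrightarrow> finite (F2span A) \<and> card (F2span A) \<le> 2 ^ card A"
proof (induction A rule: finite_induct)
  case empty then show ?case by (simp add: span_empty)
next
  case (insert a A)
  have fin: "finite (F2span A \<union> F2add a ` F2span A)" using insert by auto
  have "card (F2span A \<union> F2add a ` F2span A) \<le> card (F2span A) + card (F2add a ` F2span A)"
    by (rule card_Un_le)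
  also have "\<dots> \<le> 2 * card (F2span A)" using card_image_le[of "F2span A" "F2add a"] insert by auto
  also have "\<dots> \<le> 2 ^ card (insert a A)" using insert by simp
  finally show ?case using span_insert[of a A] fin
    by (meson card_mono finite_subset order_trans)
qed

lemma span_image:
  assumes g: "\<And>x z. g (F2add x z) = F2add (g x) (g z)" and w: "w \<in> F2span (g ` A)"
  shows "\<exists>x\<in>F2span A. g x = w"
  using w
proof (induction w rule: F2span.induct)
  case span_zero
  have "g F2zero = F2zero" using g[of F2zero F2zero] by simp
  then show ?case by auto
next
  case (span_step b x)
  then obtain a x' where "a \<in> A" "b = g a" "x' \<in> F2span A" "g x' = x" by auto
  then show ?case using g by (auto intro!: bexI[of _ "F2add a x'"] F2span.span_step)
qed

definition functional :: "nat \<Rightarrow> ((nat \<Rightarrow> bool) \<Rightarrow> bool) \<Rightarrow> bool" where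
  "functional n f \<longleftrightarrow> (\<forall>x\<in>F2vec n. \<forall>z\<in>F2vec n. f (F2add x z) = (f x \<noteq> f z))"

lemma functional_zero: "functional n f \<Longrightarrow> \<not> f F2zero"
  unfolding functional_def using add_self[of F2zero] zero_vec[of n] by metis

lemma duality:
  assumes "finite A" "A \<subseteq> F2vec n" "v \<in> F2vec n" "v \<notin> F2span A"
  shows "\<exists>f. functional n f \<and> f v \<and> (\<forall>w\<in>A. \<not> f w)"
  using assms
proof (induction "card A" arbitrary: A v rule: less_induct)
  case less
  show ?case
  proof (cases "A = {}")
    case True
    then have "v \<noteq> F2zero" using less by (auto simp: span_empty)
    then obtain p where p: "v p" by (auto simp: F2zero_def)
    show ?thesis
      by (rule exI[of _ "\<lambda>x. x p"]) (auto simp: functional_def F2add_def p True)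
  next
    case False
    then obtain w where wA: "w \<in> A" by auto
    define A' where "A' = A - {w}"
    have A: "A = insert w A'" using wA A'_def by auto
    have cA': "card A' < card A" using less.prems(1) wA A'_def by (meson card_Diff1_less)
    have finA': "finite A'" using less.prems(1) A'_def by auto
    show ?thesis
    proof (cases "w = F2zero")
      case True
      have "v \<notin> F2span A'" using less.prems(4) span_mono[of A' A] A by auto
      then obtain f where f: "functional n f" "f v" "\<forall>u\<in>A'. \<not> f u"
        using less.hyps[OF cA' finA' _ less.prems(3)] less.prems(2) A by auto
      then show ?thesis using A True functional_zero[OF f(1)] by auto
    next
      case False
      then obtain p where p: "w p" by (auto simp: F2zero_def fun_eq_iff)
      define \<pi> where "\<pi> x = (if x p then F2add x w else x)" for x
      have \<pi>add: "\<pi> (F2add x z) = F2add (\<pi> x) (\<pi> z)" for x z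
        by (auto simp: \<pi>_def F2add_def fun_eq_iff)
      have \<pi>w: "\<pi> w = F2zero" using p by (simp add: \<pi>_def)
      have \<pi>vec: "x \<in> F2vec n \<Longrightarrow> \<pi> x \<in> F2vec n" for x
        using less.prems(2) wA by (auto simp: \<pi>_def)
      have \<pi>ker: "\<pi> x = F2zero \<Longrightarrow> x = F2zero \<or> x = w" for x
        by (auto simp: \<pi>_def split: if_splits) (metis add_cancel(2) add_zero(2))
      have c: "card (\<pi> ` A') < card A" using cA' card_image_le[OF finA', of \<pi>] by linarith
      have nsp: "\<pi> v \<notin> F2span (\<pi> ` A')"
      proof
        assume "\<pi> v \<in> F2span (\<pi> ` A')"
        then obtain x where x: "x \<in> F2span A'" "\<pi> x = \<pi> v" using span_image[OF \<pi>add] by blast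
        then have "\<pi> (F2add x v) = F2zero" by (simp add: \<pi>add)
        then have "F2add x v = F2zero \<or> F2add x v = w" using \<pi>ker by blast
        then have "v = x \<or> v = F2add w x" by (metis add_cancel(1) add_comm add_zero(1))
        moreover have "x \<in> F2span A" using x(1) span_mono[of A' A] A by auto
        moreover have "w \<in> F2span A" using wA by (rule span_base)
        ultimately have "v \<in> F2span A" using span_add by blast
        then show False using less.prems(4) by blast
      qed
      have sub: "\<pi> ` A' \<subseteq> F2vec n" using less.prems(2) A \<pi>vec by auto
      obtain f where f: "functional n f" "f (\<pi> v)" "\<forall>u\<in>\<pi> ` A'. \<not> f u"
        using less.hyps[OF c _ sub \<pi>vec[OF less.prems(3)] nsp] finA' by auto
      have "functional n (f \<circ> \<pi>)"
        using f(1) \<pi>vec by (auto simp: functional_def \<pi>add)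
      moreover have "\<not> (f \<circ> \<pi>) w" using \<pi>w functional_zero[OF f(1)] by simp
      ultimately show ?thesis using f A by (intro exI[of _ "f \<circ> \<pi>"]) auto
    qed
  qed
qed


definition indepL :: "(nat \<Rightarrow> bool) list \<Rightarrow> bool" where
  "indepL vs \<longleftrightarrow> (\<forall>i<length vs. vs ! i \<notin> F2span (set (take i vs)))"

lemma indepL_snoc: "indepL (vs @ [v]) \<longleftrightarrow> indepL vs \<and> v \<notin> F2span (set vs)"
  unfolding indepL_def by (auto simp: nth_append less_Suc_eq)

definition Tset :: "nat \<Rightarrow> nat \<Rightarrow> (nat \<Rightarrow> bool) \<Rightarrow> (nat \<Rightarrow> bool) list \<Rightarrow> ((nat \<Rightarrow> bool) \<Rightarrow> (nat \<Rightarrow> bool)) set" where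
  "Tset n m y vs = {B \<in> F2lin n m. \<forall>u\<in>set vs. B u = y}"

lemma finite_F2lin: "finite (F2lin n m)"
proof -
  have "F2lin n m \<subseteq> F2vec n \<rightarrow>\<^sub>E F2vec m" by (auto simp: F2lin_def)
  then show ?thesis by (rule finite_subset) (intro finite_PiE; simp)
qed

lemma F2lin_nonempty: "(\<lambda>x. if x \<in> F2vec n then F2zero else undefined) \<in> F2lin n m"
  by (auto simp: F2lin_def)

lemma prob_step:
  assumes y: "y \<in> F2vec m" and vs: "set vs \<subseteq> F2vec n" and v: "v \<in> F2vec n"
    and nsp: "v \<notin> F2span (set vs)"
  shows "card (Tset n m y vs) = 2 ^ m * card (Tset n m y (vs @ [v]))"
proof -
  obtain f where f: "functional n f" "f v" "\<forall>u\<in>set vs. \<not> f u"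
    using duality[OF _ vs v nsp] by auto
  define sh where "sh w B = (\<lambda>x. if x \<in> F2vec n then (if f x then F2add (B x) w else B x) else undefined)"
    for w and B :: "(nat \<Rightarrow> bool) \<Rightarrow> (nat \<Rightarrow> bool)"
  have s1: "sh w B \<in> F2lin n m" if B: "B \<in> F2lin n m" and w: "w \<in> F2vec m" for w B
  proof -
    have Bv: "B x \<in> F2vec m" if "x \<in> F2vec n" for x using B that by (auto simp: F2lin_def)
    have Blin: "B (F2add x z) = F2add (B x) (B z)" if "x \<in> F2vec n" "z \<in> F2vec n" for x z
      using B that by (auto simp: F2lin_def)
    have fl: "f (F2add x z) = (f x \<noteq> f z)" if "x \<in> F2vec n" "z \<in> F2vec n" for x z
      using f(1) that by (auto simp: functional_def)
    show ?thesis unfolding F2lin_def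
    proof (intro CollectI conjI ballI)
      show "sh w B \<in> F2vec n \<rightarrow>\<^sub>E F2vec m" using Bv w by (auto simp: sh_def intro!: add_vec)
      fix x z assume xz: "x \<in> F2vec n" "z \<in> F2vec n"
      then show "sh w B (F2add x z) = F2add (sh w B x) (sh w B z)"
        using Blin[OF xz] fl[OF xz] add_vec[OF xz]
        by (auto simp: sh_def F2add_def fun_eq_iff)
    qed
  qed
  have s2: "sh w (sh w B) = B" if B: "B \<in> F2lin n m" for w B
    using B by (auto simp: sh_def fun_eq_iff F2lin_def PiE_def extensional_def)
  have s3: "sh w B \<in> Tset n m y vs" if B: "B \<in> Tset n m y vs" and w: "w \<in> F2vec m" for w B
    using B s1[OF _ w, of B] f(3) vs by (auto simp: Tset_def sh_def)
  have s4: "sh w B v = F2add (B v) w" for w B using v f(2) by (simp add: sh_def)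
  define Az where "Az z = {B \<in> Tset n m y vs. B v = z}" for z
  have finT: "finite (Tset n m y vs)" using finite_F2lin by (auto simp: Tset_def)
  have cAz: "card (Az z) = card (Az y)" if z: "z \<in> F2vec m" for z
  proof -
    have w: "F2add y z \<in> F2vec m" using y z by auto
    have "bij_betw (sh (F2add y z)) (Az y) (Az z)"
    proof (rule bij_betw_byWitness[where f'="sh (F2add y z)"])
      show "\<forall>a\<in>Az y. sh (F2add y z) (sh (F2add y z) a) = a"
        using s2 by (auto simp: Az_def Tset_def)
      show "\<forall>a\<in>Az z. sh (F2add y z) (sh (F2add y z) a) = a"
        using s2 by (auto simp: Az_def Tset_def)
      show "sh (F2add y z) ` Az y \<subseteq> Az z"
        using s3[OF _ w] s4 by (auto simp: Az_def)
      show "sh (F2add y z) ` Az z \<subseteq> Az y"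
        using s3[OF _ w] s4 by (auto simp: Az_def F2add_def fun_eq_iff)
    qed
    then show ?thesis by (simp add: bij_betw_same_card)
  qed
  have TU: "Tset n m y vs = (\<Union>z\<in>F2vec m. Az z)"
    using v by (auto simp: Az_def Tset_def F2lin_def)
  have "card (Tset n m y vs) = (\<Sum>z\<in>F2vec m. card (Az z))"
    unfolding TU by (rule card_UN_disjoint) (use finT in \<open>auto simp: Az_def\<close>)
  also have "\<dots> = (\<Sum>z\<in>F2vec m. card (Az y))" using cAz by simp
  also have "\<dots> = 2 ^ m * card (Az y)" by (simp add: card_F2vec)
  also have "Az y = Tset n m y (vs @ [v])" by (auto simp: Az_def Tset_def)
  finally show ?thesis .
qed

lemma prob_count:
  assumes y: "y \<in> F2vec m" and vs: "set vs \<subseteq> F2vec n" and ind: "indepL vs"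
  shows "card (Tset n m y vs) * 2 ^ (m * length vs) = card (F2lin n m)"
  using vs ind
proof (induction vs rule: rev_induct)
  case Nil then show ?case by (simp add: Tset_def)
next
  case (snoc v vs)
  have "card (Tset n m y vs) = 2 ^ m * card (Tset n m y (vs @ [v]))"
    using snoc.prems by (intro prob_step[OF y]) (auto simp: indepL_snoc)
  moreover have "card (Tset n m y vs) * 2 ^ (m * length vs) = card (F2lin n m)"
    using snoc by (auto simp: indepL_snoc)
  ultimately show ?case by (simp add: power_add algebra_simps)
qed


lemma count_lower:
  assumes S: "S \<subseteq> F2vec n - {F2zero}" "finite S" "card S \<ge> 2^a - 1" and k: "k \<le> a"
  shows "(\<Prod>j<k. (2^a - 2^j::nat)) \<le> card {vs. length vs = k \<and> set vs \<subseteq> S \<and> indepL vs}"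
  using k
proof (induction k)
  case 0
  have "{vs. length vs = 0 \<and> set vs \<subseteq> S \<and> indepL vs} = {[]}" by (auto simp: indepL_def)
  then show ?case by simp
next
  case (Suc k)
  define Lk where "Lk = {vs. length vs = k \<and> set vs \<subseteq> S \<and> indepL vs}"
  define Lk1 where "Lk1 = {vs. length vs = Suc k \<and> set vs \<subseteq> S \<and> indepL vs}"
  have finL: "finite {vs. set vs \<subseteq> S \<and> length vs = j}" for j by (rule finite_lists_length_eq[OF S(2)])
  have finLk: "finite Lk" by (rule finite_subset[OF _ finL[of k]]) (auto simp: Lk_def)
  have finLk1: "finite Lk1" by (rule finite_subset[OF _ finL[of "Suc k"]]) (auto simp: Lk1_def)
  define Sig where "Sig = (SIGMA vs:Lk. S - F2span (set vs))"
  have inj: "inj_on (\<lambda>(vs, v). vs @ [v]) Sig" by (auto simp: inj_on_def)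
  have img: "(\<lambda>(vs, v). vs @ [v]) ` Sig \<subseteq> Lk1"
    by (auto simp: Sig_def Lk_def Lk1_def indepL_snoc)
  have each: "2^a - 2^k \<le> card (S - F2span (set vs))" if vs: "vs \<in> Lk" for vs
  proof -
    have sv: "set vs \<subseteq> F2vec n" using vs S(1) by (auto simp: Lk_def)
    have sp: "finite (F2span (set vs))" "card (F2span (set vs)) \<le> 2 ^ card (set vs)"
      using span_card[of "set vs"] by auto
    have "2 ^ card (set vs) \<le> (2::nat) ^ k"
      using vs card_length[of vs] by (auto simp: Lk_def intro: power_increasing)
    then have c1: "card (F2span (set vs)) \<le> 2 ^ k" using sp by linarith
    have "S \<inter> F2span (set vs) \<subseteq> F2span (set vs) - {F2zero}" using S(1) by auto
    then have "card (S \<inter> F2span (set vs)) \<le> card (F2span (set vs) - {F2zero})"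
      by (intro card_mono) (use sp in auto)
    also have "\<dots> = card (F2span (set vs)) - 1" using sp by simp
    finally have c2: "card (S \<inter> F2span (set vs)) \<le> 2 ^ k - 1" using c1 by linarith
    have c3: "card (S - F2span (set vs)) = card S - card (S \<inter> F2span (set vs))"
      by (rule card_Diff_subset_Int) (use S(2) in auto)
    have "(2::nat) ^ k \<le> 2 ^ a" using Suc.prems by (intro power_increasing) auto
    moreover have "(1::nat) \<le> 2 ^ k" by simp
    ultimately show ?thesis using c2 c3 S(3) by linarith
  qed
  have "(\<Prod>j<Suc k. (2^a - 2^j::nat)) = (\<Prod>j<k. (2^a - 2^j::nat)) * (2^a - 2^k)" by simp
  also have "\<dots> \<le> card Lk * (2^a - 2^k)"
    using Suc by (simp add: Lk_def)
  also have "\<dots> = (\<Sum>vs\<in>Lk. 2^a - 2^k)" by simp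
  also have "\<dots> \<le> (\<Sum>vs\<in>Lk. card (S - F2span (set vs)))" by (intro sum_mono each)
  also have "\<dots> = card Sig" unfolding Sig_def using finLk S(2) by simp
  also have "\<dots> = card ((\<lambda>(vs, v). vs @ [v]) ` Sig)" by (simp add: card_image[OF inj])
  also have "\<dots> \<le> card Lk1" by (rule card_mono[OF finLk1 img])
  finally show ?case by (simp add: Lk1_def)
qed


lemma P_bound: "gamma2 * 2 ^ (a^2) \<le> real (\<Prod>j<a. (2^a - 2^j::nat))"
proof -
  define g where "g j = 1 - (1/2::real) ^ (a - j)" for j
  have "real (\<Prod>j<a. (2^a - 2^j::nat)) = (\<Prod>j<a. (2^a - 2^j::real))"
    by (simp add: of_nat_diff power_increasing)
  also have "\<dots> = (\<Prod>j<a. 2^a * g j)"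
  proof (rule prod.cong[OF refl])
    fix j assume "j \<in> {..<a}"
    then have "(2::real)^a = 2^j * 2^(a-j)" by (simp add: power_add[symmetric])
    then show "(2^a - 2^j::real) = 2^a * g j"
      by (simp add: g_def algebra_simps power_one_over)
  qed
  also have "\<dots> = (2^a)^a * (\<Prod>j<a. g j)" by (simp add: prod.distrib)
  also have "(\<Prod>j<a. g j) = (\<Prod>i<a. g (a - Suc i))" by (rule prod.nat_diff_reindex[symmetric])
  also have "\<dots> = (\<Prod>i<a. 1 - (1/2::real) ^ Suc i)"
    by (rule prod.cong[OF refl]) (auto simp: g_def Suc_diff_Suc)
  also have "((2::real)^a)^a = 2^(a^2)" by (simp add: power_mult[symmetric] power2_eq_square)
  finally show ?thesis using gamma_le[of a] by (simp add: mult.commute)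
qed

theorem corollary2p3:
  fixes n m a :: nat and U :: "(nat \<Rightarrow> bool) set" and y :: "nat \<Rightarrow> bool"
  assumes "U \<subseteq> F2vec n - {F2zero}"
    and "card U = 2 ^ m"
    and "y \<in> F2vec m"
    and "a \<ge> 1"
  shows "measure_pmf.prob (pmf_of_set (F2lin n m))
           {B. int (card {u \<in> U. B u = y}) > 2 ^ a - 2}
         \<le> inverse gamma2 * 2 powr (- real (a ^ 2))"
proof -
  define F where "F = F2lin n m"
  define L where "L = {vs. length vs = a \<and> set vs \<subseteq> U \<and> indepL vs}"
  define P where "P = (\<Prod>j<a. (2^a - 2^j::nat))"
  define E where "E = {B. int (card {u \<in> U. B u = y}) > 2 ^ a - 2}"
  define N where "N B = card {vs \<in> L. \<forall>u\<in>set vs. B u = y}" for B :: "(nat \<Rightarrow> bool) \<Rightarrow> (nat \<Rightarrow> bool)"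
  have finF: "finite F" unfolding F_def by (rule finite_F2lin)
  have neF: "F \<noteq> {}" unfolding F_def using F2lin_nonempty by blast
  have finU: "finite U" using assms(2) by (metis card.infinite power_not_zero zero_neq_numeral)
  have finL: "finite L"
    by (rule finite_subset[OF _ finite_lists_length_eq[OF finU, of a]]) (auto simp: L_def)
  have cL: "card L \<le> 2 ^ (m * a)"
  proof -
    have "card L \<le> card {xs. set xs \<subseteq> U \<and> length xs = a}"
      by (rule card_mono[OF finite_lists_length_eq[OF finU]]) (auto simp: L_def)
    then show ?thesis by (simp add: card_lists_length_eq[OF finU] assms(2) power_mult)
  qed
  have key: "P \<le> N B" if B: "B \<in> F \<inter> E" for B
  proof -
    define S where "S = {u \<in> U. B u = y}"
    have h: "int (2^a - 1) = 2^a - 1" by (simp add: of_nat_diff)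
    have "2^a - 2 < int (card S)" using B by (simp add: E_def S_def)
    then have "int (2^a - 1) \<le> int (card S)" using h by linarith
    then have cS: "2^a - 1 \<le> card S" by linarith
    have "{vs \<in> L. \<forall>u\<in>set vs. B u = y} = {vs. length vs = a \<and> set vs \<subseteq> S \<and> indepL vs}"
      by (auto simp: L_def S_def)
    then show ?thesis unfolding N_def P_def
      by (metis (no_types, lifting) count_lower[of S n a a] assms(1) cS finU S_def
          Diff_subset finite_subset le_refl mem_Collect_eq subset_iff)
  qed
  have ind: "card {x \<in> A. Q x} = (\<Sum>x\<in>A. if Q x then 1 else 0)" if "finite A" for A :: "'b set" and Q
    using that by (simp add: sum.inter_filter[symmetric])
  have "(\<Sum>B\<in>F. N B) = (\<Sum>B\<in>F. \<Sum>vs\<in>L. if (\<forall>u\<in>set vs. B u = y) then 1 else 0)"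
    unfolding N_def using finL by (simp add: ind)
  also have "\<dots> = (\<Sum>vs\<in>L. \<Sum>B\<in>F. if (\<forall>u\<in>set vs. B u = y) then 1 else 0)" by (rule sum.swap)
  also have "\<dots> = (\<Sum>vs\<in>L. card (Tset n m y vs))"
    using finF by (simp add: ind Tset_def F_def)
  finally have sumeq: "(\<Sum>B\<in>F. N B) = (\<Sum>vs\<in>L. card (Tset n m y vs))" .
  have "(\<Sum>vs\<in>L. card (Tset n m y vs)) * 2 ^ (m * a) = (\<Sum>vs\<in>L. card (Tset n m y vs) * 2 ^ (m * length vs))"
    by (simp add: sum_distrib_right L_def)
  also have "\<dots> = (\<Sum>vs\<in>L. card F)"
  proof (rule sum.cong[OF refl])
    fix vs assume "vs \<in> L"
    then show "card (Tset n m y vs) * 2 ^ (m * length vs) = card F"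
      unfolding F_def using assms(1) by (intro prob_count[OF assms(3)]) (auto simp: L_def)
  qed
  also have "\<dots> = card L * card F" by simp
  also have "\<dots> \<le> 2 ^ (m * a) * card F" using cL by simp
  finally have "(\<Sum>B\<in>F. N B) \<le> card F" using sumeq by (simp add: mult.commute)
  moreover have "card (F \<inter> E) * P \<le> (\<Sum>B\<in>F \<inter> E. N B)"
    using sum_mono[of "F \<inter> E" "\<lambda>_. P" N] key by (simp add: mult.commute)
  moreover have "(\<Sum>B\<in>F \<inter> E. N B) \<le> (\<Sum>B\<in>F. N B)"
    by (rule sum_mono2[OF finF]) auto
  ultimately have main: "card (F \<inter> E) * P \<le> card F" by linarith
  have Ppos: "P > 0" unfolding P_def
    by (intro prod_pos) (auto intro: power_strict_increasing)
  have cFpos: "card F > 0" using finF neF by (simp add: card_gt_0_iff)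
  have prob: "measure_pmf.prob (pmf_of_set F) E = card (F \<inter> E) / card F"
    by (rule measure_pmf_of_set[OF neF finF])
  have "real (card (F \<inter> E)) * real P \<le> real (card F)"
    using main by (metis of_nat_le_iff of_nat_mult)
  then have "card (F \<inter> E) / card F \<le> 1 / real P"
    using Ppos cFpos by (simp add: field_simps)
  also have "\<dots> \<le> 1 / (gamma2 * 2 ^ (a^2))"
  proof (rule divide_left_mono)
    show "gamma2 * 2 ^ (a^2) \<le> real P" using P_bound[of a] unfolding P_def .
    show "0 < real P * (gamma2 * 2 ^ (a^2))" using Ppos gamma_pos by simp
  qed simp
  also have "\<dots> = inverse gamma2 * 2 powr (- real (a ^ 2))"
  proof -
    have "(2::real) powr (- real (a ^ 2)) = inverse (2 ^ (a^2))"
      by (simp add: powr_minus powr_realpow[symmetric] del: of_nat_power)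
    then show ?thesis by (simp only: divide_inverse mult_1_left inverse_mult_distrib)
  qed
  finally show ?thesis using prob by (simp add: F_def E_def)
qed

end
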